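(* Let $T\ge1$, $\mathcal{X}_t=\mathbb{R}^{d_t}$ for $t\in\{0,\dots,T\}$, and $\mathcal{A}_1,\dots,\mathcal{A}_T$ finite sets. On a probability space, let $X_0$ be $\mathcal{X}_0$-valued, let $X_s(a_{1:s})$ be $\mathcal{X}_s$-valued random variables for $s\in\{1,\dots,T\}$, $a_{1:s}\in\mathcal{A}_{1:s}$, let $A_s$ be $\mathcal{A}_s$-valued random variables for $s\in\{1,\dots,T\}$, and fix $t\in\{1,\dots,T\}$ and real-valued random variables $(Y(a'_{1:t}) : a'_{1:t}\in\mathcal{A}_{1:t})$. Suppose that for some $a_{1:t}\in\mathcal{A}_{1:t}$, measurable $B_{0:t}\subseteq\mathcal{X}_{0:t}$ (i.e. measurable $B_s\subseteq\mathcal{X}_s$ for each $s$) and $\underline{y},\overline{y}\in\mathbb{R}$ we have $$\mathbb{P}(X_{0:t}(a_{1:t})\in B_{0:t})>0,\qquad \mathbb{P}\big(\underline{y}\le Y(a_{1:t})\le \overline{y}\ \big|\ X_{0:t}(a_{1:t})\in B_{0:t}\big)=1.$$ Define $N:=\max\{0\le s\le t : A_{1:s}=a_{1:s}\}$ and $$\underline{Y}:=\mathbb{1}(A_{1:t}=a_{1:t})\,Y(A_{1:t})+\mathbb{1}(A_{1:t}\ne a_{1:t})\,\underline{y},\qquad \overline{Y}:=\mathbb{1}(A_{1:t}=a_{1:t})\,Y(A_{1:t})+\mathbb{1}(A_{1:t}\ne a_{1:t})\,\overline{y}.$$ Then $$\mathbb{E}[\underline{Y}\mid X_{0:N}(A_{1:N})\in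 B_{0:N}]\le \mathbb{E}[Y(a_{1:t})\mid X_{0:t}(a_{1:t})\in B_{0:t}]\le \mathbb{E}[\overline{Y}\mid X_{0:N}(A_{1:N})\in B_{0:N}].$$
   Context: Notation: $z_{t:t'}=(z_t,\dots,z_{t'})$ (empty if $t>t'$); $X_{0:s}(a_{1:s})=(X_0,X_1(a_1),\dots,X_s(a_{1:s}))$; $X_{0:s}(a_{1:s})\in B_{0:s}$ means $X_0\in B_0$ and $X_r(a_{1:r})\in B_r$ for $1\le r\le s$; $Y(A_{1:t})$ and $X_{0:N}(A_{1:N})$ denote the potential outcomes evaluated at the random actions (with $N$ random); $A_{1:0}=a_{1:0}$ holds vacuously, so $N\ge0$ and $X_{0:0}(A_{1:0})=X_0$. No assumption is made on the joint dependence between the actions $A_{1:T}$ and the potential outcomes. *)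

theory Defs
  imports "HOL-Probability.Probability"
begin

text \<open>Euclidean space R^d rendered as the product measurable space of d copies of borel
  (functions on indices 0..d-1, extensional outside).\<close>
abbreviation Rspace :: "nat \<Rightarrow> (nat \<Rightarrow> real) measure" where
  "Rspace d \<equiv> PiM {..<d} (\<lambda>_. borel)"

text \<open>Action sequences a_{1:s} are lists of length s whose i-th entry (1-based) lies in Act i.\<close>
definition act_seqs :: "(nat \<Rightarrow> 'b set) \<Rightarrow> nat \<Rightarrow> 'b list set" where
  "act_seqs Act s = {as. length as = s \<and> (\<forall>i<s. as ! i \<in> Act (Suc i))}"

definition act_hist :: "(nat \<Rightarrow> 'w \<Rightarrow> 'b) \<Rightarrow> nat \<Rightarrow> 'w \<Rightarrow> 'b list" where
  "act_hist A s \<omega> = map (\<lambda>i. A i \<omega>) [1..<Suc s]"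

text \<open>Event {X_{0:s}(a_{1:s}) \<in> B_{0:s}} for a fixed action sequence a (of length \<ge> s).\<close>
definition hist_event :: "'w measure \<Rightarrow> (nat \<Rightarrow> 'b list \<Rightarrow> 'w \<Rightarrow> nat \<Rightarrow> real)
    \<Rightarrow> (nat \<Rightarrow> (nat \<Rightarrow> real) set) \<Rightarrow> nat \<Rightarrow> 'b list \<Rightarrow> 'w set" where
  "hist_event M X B s a = {\<omega> \<in> space M. \<forall>r\<le>s. X r (take r a) \<omega> \<in> B r}"

definition Nidx :: "(nat \<Rightarrow> 'w \<Rightarrow> 'b) \<Rightarrow> nat \<Rightarrow> 'b list \<Rightarrow> 'w \<Rightarrow> nat" where
  "Nidx A t a \<omega> = Max {s. s \<le> t \<and> act_hist A s \<omega> = take s a}"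

definition rand_hist_event :: "'w measure \<Rightarrow> (nat \<Rightarrow> 'b list \<Rightarrow> 'w \<Rightarrow> nat \<Rightarrow> real)
    \<Rightarrow> (nat \<Rightarrow> 'w \<Rightarrow> 'b) \<Rightarrow> (nat \<Rightarrow> (nat \<Rightarrow> real) set) \<Rightarrow> nat \<Rightarrow> 'b list \<Rightarrow> 'w set" where
  "rand_hist_event M X A B t a =
     {\<omega> \<in> space M. \<forall>r\<le>Nidx A t a \<omega>. X r (act_hist A r \<omega>) \<omega> \<in> B r}"

definition cond_prob_ev :: "'w measure \<Rightarrow> 'w set \<Rightarrow> 'w set \<Rightarrow> real" where
  "cond_prob_ev M C E = measure M (C \<inter> E) / measure M E"

definition cond_exp_ev :: "'w measure \<Rightarrow> ('w \<Rightarrow> real) \<Rightarrow> 'w set \<Rightarrow> real" where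
  "cond_exp_ev M f E = (\<integral>\<omega>. indicator E \<omega> * f \<omega> \<partial>M) / measure M E"

end

theory Submission
  imports Defs
begin
lemma core:
  fixes f :: "'w \<Rightarrow> real"
  assumes ps: "prob_space M" and EFG: "E \<in> sets M" "F \<in> sets M" "G \<in> sets M"
    and EF: "E \<subseteq> F" and FG: "F \<inter> G \<subseteq> E" and pos: "measure M E > 0"
    and int: "integrable M (\<lambda>\<omega>. indicator E \<omega> * f \<omega>)"
    and bnd: "AE \<omega> in M. \<omega> \<in> E \<longrightarrow> c \<le> f \<omega> \<and> f \<omega> \<le> C"
  shows "(\<integral>\<omega>. indicator (E\<inter>G) \<omega> * f \<omega> + indicator (F - G) \<omega> * c \<partial>M) / measure M F
           \<le> (\<integral>\<omega>. indicator E \<omega> * f \<omega> \<partial>M) / measure M E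
      \<and> (\<integral>\<omega>. indicator E \<omega> * f \<omega> \<partial>M) / measure M E
           \<le> (\<integral>\<omega>. indicator (E\<inter>G) \<omega> * f \<omega> + indicator (F - G) \<omega> * C \<partial>M) / measure M F"
proof -
  interpret prob_space M by (rule ps)
  define g where "g = (\<lambda>\<omega>. indicator E \<omega> * f \<omega>)"
  define m where "m = integral\<^sup>L M g / measure M E"
  have intg: "integrable M g" using int g_def by simp
  have intE: "integrable M (\<lambda>\<omega>. indicator E \<omega> * (k::real))" for k
    using EFG by (intro integrable_mult_left integrable_real_indicator) (auto simp: emeasure_eq_measure)
  have intD: "integrable M (\<lambda>\<omega>. indicator (F - E) \<omega> * (k::real))" for k
    using EFG by (intro integrable_mult_left integrable_real_indicator) (auto simp: emeasure_eq_measure)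
  have intGg: "integrable M (\<lambda>\<omega>. indicator G \<omega> * g \<omega>)"
    using integrable_mult_indicator[OF EFG(3) intg] by simp
  have intH: "integrable M (\<lambda>\<omega>. indicator (E\<inter>G) \<omega> * f \<omega> + indicator (F - G) \<omega> * k)" for k
  proof -
    have "integrable M (\<lambda>\<omega>. indicator G \<omega> * g \<omega> + indicator (F - G) \<omega> * (k::real))"
      using EFG by (intro Bochner_Integration.integrable_add intGg integrable_mult_left integrable_real_indicator) (auto simp: emeasure_eq_measure)
    moreover have "(\<lambda>\<omega>. indicator G \<omega> * g \<omega> + indicator (F - G) \<omega> * k)
        = (\<lambda>\<omega>. indicator (E\<inter>G) \<omega> * f \<omega> + indicator (F - G) \<omega> * k)"
      by (auto simp: g_def indicator_def fun_eq_iff)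
    ultimately show ?thesis by simp
  qed
  have PF: "measure M F = measure M E + measure M (F - E)"
    using finite_measure_Diff[OF EFG(2,1) EF] by simp
  have Fpos: "measure M F > 0" using PF pos measure_nonneg[of M "F - E"] by linarith
  have intDm: "integral\<^sup>L M (\<lambda>\<omega>. g \<omega> + indicator (F - E) \<omega> * m) = m * measure M F"
  proof -
    have "integral\<^sup>L M (\<lambda>\<omega>. g \<omega> + indicator (F - E) \<omega> * m)
        = integral\<^sup>L M g + measure M (F - E) * m"
      using intg intD EFG by (simp add: Bochner_Integration.integral_add)
    also have "\<dots> = m * measure M F" using pos unfolding PF m_def by (simp add: field_simps)
    finally show ?thesis .
  qed
  have lo: "c * measure M E \<le> integral\<^sup>L M g"
  proof -
    have "integral\<^sup>L M (\<lambda>\<omega>. indicator E \<omega> * c) \<le> integral\<^sup>L M g"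
      using bnd by (intro integral_mono_AE intE intg) (auto simp: g_def indicator_def)
    then show ?thesis using EFG by (simp add: mult.commute)
  qed
  have hi: "integral\<^sup>L M g \<le> C * measure M E"
  proof -
    have "integral\<^sup>L M g \<le> integral\<^sup>L M (\<lambda>\<omega>. indicator E \<omega> * C)"
      using bnd by (intro integral_mono_AE intE intg) (auto simp: g_def indicator_def)
    then show ?thesis using EFG by (simp add: mult.commute)
  qed
  have cm: "c \<le> m" using lo pos by (simp add: m_def field_simps)
  have mC: "m \<le> C" using hi pos by (simp add: m_def field_simps)
  have "integral\<^sup>L M (\<lambda>\<omega>. indicator (E\<inter>G) \<omega> * f \<omega> + indicator (F - G) \<omega> * c)
      \<le> integral\<^sup>L M (\<lambda>\<omega>. g \<omega> + indicator (F - E) \<omega> * m)"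
    apply (intro integral_mono_AE intH Bochner_Integration.integrable_add intg intD)
    using bnd apply eventually_elim
    using EF FG cm by (auto simp: g_def indicator_def)
  hence 1: "(\<integral>\<omega>. indicator (E\<inter>G) \<omega> * f \<omega> + indicator (F - G) \<omega> * c \<partial>M) / measure M F \<le> m"
    using Fpos intDm by (simp add: divide_simps mult.commute)
  have "integral\<^sup>L M (\<lambda>\<omega>. g \<omega> + indicator (F - E) \<omega> * m)
      \<le> integral\<^sup>L M (\<lambda>\<omega>. indicator (E\<inter>G) \<omega> * f \<omega> + indicator (F - G) \<omega> * C)"
    apply (intro integral_mono_AE intH Bochner_Integration.integrable_add intg intD)
    using bnd apply eventually_elim
    using EF FG mC by (auto simp: g_def indicator_def)
  hence 2: "m \<le> (\<integral>\<omega>. indicator (E\<inter>G) \<omega> * f \<omega> + indicator (F - G) \<omega> * C \<partial>M) / measure M F"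
    using Fpos intDm by (simp add: divide_simps mult.commute)
  show ?thesis using 1 2 unfolding m_def g_def by simp
qed


lemma act_hist_len: "length (act_hist A s w) = s"
  by (simp add: act_hist_def)

lemma act_hist_take: "r \<le> s \<Longrightarrow> act_hist A r w = take r (act_hist A s w)"
  by (simp del: upt_Suc add: act_hist_def take_map take_upt min_def)

lemma act_hist_eq_iff:
  assumes "r \<le> length a"
  shows "act_hist A r w = take r a \<longleftrightarrow> (\<forall>i\<in>{..<r}. A (Suc i) w = a ! i)"
  using assms by (auto simp del: upt_Suc simp: list_eq_iff_nth_eq act_hist_len act_hist_def nth_take nth_upt)

lemma Nidx_iff:
  assumes "r \<le> t" "length a = t"
  shows "r \<le> Nidx A t a w \<longleftrightarrow> act_hist A r w = take r a"
proof -
  let ?S = "{s. s \<le> t \<and> act_hist A s w = take s a}"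
  have fin: "finite ?S" by (rule finite_subset[of _ "{..t}"]) auto
  have ne: "0 \<in> ?S" by (simp add: act_hist_def)
  have inS: "Nidx A t a w \<in> ?S" unfolding Nidx_def using fin ne by (intro Max_in) auto
  show ?thesis
  proof
    assume r: "r \<le> Nidx A t a w"
    have "act_hist A r w = take r (act_hist A (Nidx A t a w) w)" using r by (rule act_hist_take)
    also have "\<dots> = take r a" using inS r by (simp add: min_def)
    finally show "act_hist A r w = take r a" .
  next
    assume "act_hist A r w = take r a"
    then have "r \<in> ?S" using assms by simp
    then show "r \<le> Nidx A t a w" unfolding Nidx_def using fin by (intro Max_ge)
  qed
qed

lemma Nidx_le: "Nidx A t a w \<le> t"
proof -
  let ?S = "{s. s \<le> t \<and> act_hist A s w = take s a}"
  have fin: "finite ?S" by (rule finite_subset[of _ "{..t}"]) auto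
  have ne: "0 \<in> ?S" by (simp add: act_hist_def)
  have inS: "Nidx A t a w \<in> ?S" unfolding Nidx_def using fin ne by (intro Max_in) auto
  then show ?thesis by simp
qed

theorem theorem2:
  fixes M :: "'w measure"
    and T t :: nat
    and d :: "nat \<Rightarrow> nat"
    and Act :: "nat \<Rightarrow> 'b set"
    and X :: "nat \<Rightarrow> 'b list \<Rightarrow> 'w \<Rightarrow> nat \<Rightarrow> real"
    and A :: "nat \<Rightarrow> 'w \<Rightarrow> 'b"
    and Y :: "'b list \<Rightarrow> 'w \<Rightarrow> real"
    and a :: "'b list"
    and B :: "nat \<Rightarrow> (nat \<Rightarrow> real) set"
    and ylo yhi :: real
  assumes "prob_space M"
    and "T \<ge> 1"
    and "\<And>s. s \<in> {1..T} \<Longrightarrow> finite (Act s)"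
    and "\<And>s as. s \<le> T \<Longrightarrow> as \<in> act_seqs Act s \<Longrightarrow> X s as \<in> M \<rightarrow>\<^sub>M Rspace (d s)"
    and "\<And>s. s \<in> {1..T} \<Longrightarrow> A s \<in> M \<rightarrow>\<^sub>M count_space UNIV"
    and "\<And>s \<omega>. s \<in> {1..T} \<Longrightarrow> \<omega> \<in> space M \<Longrightarrow> A s \<omega> \<in> Act s"
    and "t \<in> {1..T}"
    and "\<And>as. as \<in> act_seqs Act t \<Longrightarrow> Y as \<in> borel_measurable M"
    and "a \<in> act_seqs Act t"
    and "\<And>s. s \<le> t \<Longrightarrow> B s \<in> sets (Rspace (d s))"
    and "measure M (hist_event M X B t a) > 0"
    and "cond_prob_ev M {\<omega> \<in> space M. ylo \<le> Y a \<omega> \<and> Y a \<omega> \<le> yhi} (hist_event M X B t a) = 1"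
  shows "cond_exp_ev M
           (\<lambda>\<omega>. indicator {\<omega>. act_hist A t \<omega> = a} \<omega> * Y (act_hist A t \<omega>) \<omega>
               + indicator {\<omega>. act_hist A t \<omega> \<noteq> a} \<omega> * ylo)
           (rand_hist_event M X A B t a)
         \<le> cond_exp_ev M (Y a) (hist_event M X B t a)
       \<and> cond_exp_ev M (Y a) (hist_event M X B t a)
         \<le> cond_exp_ev M
           (\<lambda>\<omega>. indicator {\<omega>. act_hist A t \<omega> = a} \<omega> * Y (act_hist A t \<omega>) \<omega>
               + indicator {\<omega>. act_hist A t \<omega> \<noteq> a} \<omega> * yhi)
           (rand_hist_event M X A B t a)"
proof -
  interpret prob_space M by (rule assms(1))
  have lena: "length a = t" and aAct: "\<And>i. i < t \<Longrightarrow> a ! i \<in> Act (Suc i)"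
    using assms(9) by (auto simp: act_seqs_def)
  have tT: "t \<le> T" using assms(7) by simp
  have Xm: "X r (take r a) \<in> M \<rightarrow>\<^sub>M Rspace (d r)" if "r \<le> t" for r
    using that tT lena aAct by (intro assms(4)) (auto simp: act_seqs_def)
  have Xset: "{\<omega>\<in>space M. X r (take r a) \<omega> \<in> B r} \<in> sets M" if "r \<le> t" for r
  proof -
    have "{x\<in>space (Rspace (d r)). x \<in> B r} \<in> sets (Rspace (d r))"
      using assms(10)[OF that] sets.sets_into_space by (simp add: Int_absorb1[symmetric] Collect_conj_eq Int_commute) 
    then show ?thesis by (rule measurable_sets_Collect[OF Xm[OF that]])
  qed
  have Aset: "{\<omega>\<in>space M. A (Suc i) \<omega> = a ! i} \<in> sets M" if "i < t" for i
  proof -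
    have "A (Suc i) \<in> M \<rightarrow>\<^sub>M count_space UNIV" using that tT by (intro assms(5)) auto
    then show ?thesis by (rule measurable_sets_Collect) auto
  qed
  have Pset: "{\<omega>\<in>space M. act_hist A r \<omega> = take r a} \<in> sets M" if "r \<le> t" for r
  proof -
    have "{\<omega>\<in>space M. act_hist A r \<omega> = take r a} = {\<omega>\<in>space M. \<forall>i\<in>{..<r}. A (Suc i) \<omega> = a ! i}"
      using act_hist_eq_iff[of r a A] that lena by auto
    also have "\<dots> \<in> sets M" using that Aset by (intro sets.sets_Collect_countable_All') auto
    finally show ?thesis .
  qed
  define E where "E = hist_event M X B t a"
  define F where "F = rand_hist_event M X A B t a"
  define G where "G = {\<omega>\<in>space M. act_hist A t \<omega> = a}"
  have Eset: "E \<in> sets M"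
  proof -
    have "E = {\<omega>\<in>space M. \<forall>r\<in>{..t}. X r (take r a) \<omega> \<in> B r}" by (auto simp: E_def hist_event_def)
    also have "\<dots> \<in> sets M" using Xset by (intro sets.sets_Collect_countable_All') auto
    finally show ?thesis .
  qed
  have Feq: "F = {\<omega>\<in>space M. \<forall>r\<in>{..t}. act_hist A r \<omega> = take r a \<longrightarrow> X r (take r a) \<omega> \<in> B r}"
  proof (intro set_eqI iffI)
    fix w assume w: "w \<in> F"
    have "X r (take r a) w \<in> B r" if r: "r \<le> t" "act_hist A r w = take r a" for r
    proof -
      have "r \<le> Nidx A t a w" using Nidx_iff[OF r(1) lena, of A w] r(2) by simp
      then have "X r (act_hist A r w) w \<in> B r" using w by (auto simp: F_def rand_hist_event_def)
      then show ?thesis using r(2) by simp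
    qed
    then show "w \<in> {\<omega>\<in>space M. \<forall>r\<in>{..t}. act_hist A r \<omega> = take r a \<longrightarrow> X r (take r a) \<omega> \<in> B r}"
      using w by (auto simp: F_def rand_hist_event_def)
  next
    fix w assume w: "w \<in> {\<omega>\<in>space M. \<forall>r\<in>{..t}. act_hist A r \<omega> = take r a \<longrightarrow> X r (take r a) \<omega> \<in> B r}"
    have "X r (act_hist A r w) w \<in> B r" if r: "r \<le> Nidx A t a w" for r
    proof -
      have rt: "r \<le> t" using r Nidx_le[of A t a w] by linarith
      have h: "act_hist A r w = take r a" using Nidx_iff[OF rt lena, of A w] r by simp
      show ?thesis using w rt h by auto
    qed
    then show "w \<in> F" using w by (simp add: F_def rand_hist_event_def)
  qed
  have Fset: "F \<in> sets M"
    unfolding Feq using Xset Pset by (intro sets.sets_Collect_countable_All' sets.sets_Collect_imp) auto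
  have Gset: "G \<in> sets M" using Pset[of t] lena by (simp add: G_def)
  have EF: "E \<subseteq> F" unfolding Feq by (auto simp: E_def hist_event_def)
  have FG: "F \<inter> G \<subseteq> E"
  proof
    fix w assume w: "w \<in> F \<inter> G"
    then have "act_hist A r w = take r a" if "r \<le> t" for r
      using act_hist_take[OF that, of A w] by (simp add: G_def)
    then show "w \<in> E" using w unfolding Feq by (auto simp: E_def hist_event_def)
  qed
  have Ym[measurable]: "Y a \<in> borel_measurable M" using assms(8,9) by simp
  define Cs where "Cs = {\<omega> \<in> space M. ylo \<le> Y a \<omega> \<and> Y a \<omega> \<le> yhi}"
  have Cset: "Cs \<in> sets M" unfolding Cs_def by measurable
  have "measure M (Cs \<inter> E) = measure M E"
    using assms(12,11) by (simp add: cond_prob_ev_def E_def Cs_def)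
  then have "measure M (E - Cs) = 0" using finite_measure_Diff'[OF Eset Cset] by (simp add: Int_commute)
  then have null: "E - Cs \<in> null_sets M" using Eset Cset by (simp add: null_sets_def emeasure_eq_measure)
  have bnd: "AE \<omega> in M. \<omega> \<in> E \<longrightarrow> ylo \<le> Y a \<omega> \<and> Y a \<omega> \<le> yhi"
    by (rule AE_I'[OF null]) (auto simp: Cs_def)
  have int: "integrable M (\<lambda>\<omega>. indicator E \<omega> * Y a \<omega>)"
  proof (rule Bochner_Integration.integrable_bound[where f="\<lambda>_. \<bar>ylo\<bar> + \<bar>yhi\<bar>"])
    show "integrable M (\<lambda>_. \<bar>ylo\<bar> + \<bar>yhi\<bar>)" by simp
    show "(\<lambda>\<omega>. indicator E \<omega> * Y a \<omega>) \<in> borel_measurable M" using Eset by measurable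
    show "AE x in M. norm (indicator E x * Y a x) \<le> norm (\<bar>ylo\<bar> + \<bar>yhi\<bar>)"
      using bnd by eventually_elim (auto simp: indicator_def)
  qed
  have pos: "measure M E > 0" using assms(11) by (simp add: E_def)
  note c = core[OF assms(1) Eset Fset Gset EF FG pos int bnd]
  have eq: "integral\<^sup>L M (\<lambda>\<omega>. indicator F \<omega> * (indicator {\<omega>. act_hist A t \<omega> = a} \<omega> * Y (act_hist A t \<omega>) \<omega>
               + indicator {\<omega>. act_hist A t \<omega> \<noteq> a} \<omega> * k))
        = integral\<^sup>L M (\<lambda>\<omega>. indicator (E\<inter>G) \<omega> * Y a \<omega> + indicator (F - G) \<omega> * k)" for k
  proof (rule Bochner_Integration.integral_cong[OF refl])
    fix w assume w: "w \<in> space M"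
    show "indicator F w * (indicator {\<omega>. act_hist A t \<omega> = a} w * Y (act_hist A t w) w
               + indicator {\<omega>. act_hist A t \<omega> \<noteq> a} w * k)
        = indicator (E\<inter>G) w * Y a w + indicator (F - G) w * k"
      using w EF FG by (auto simp: indicator_def G_def)
  qed
  show ?thesis using c unfolding cond_exp_ev_def eq E_def[symmetric] F_def[symmetric] by simp
qed

end
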